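(* Assume that $\hat{s}(X)$ is continuously distributed. Let $i\neq j$ be two indices such that $X_{2n+i}$ and $X_{2n+j}$ are inliers, i.e. they are drawn i.i.d. from $P_X$, independently of $\mathcal{D}$. Then, for any finite-valued function $G:[0,1]\to\mathbb{R}$, \[\mathrm{Cor}\left[ G(\hat{u}^{\mathrm{(marg)}}(X_{2n+i})), G(\hat{u}^{\mathrm{(marg)}}(X_{2n+j})) \right] = \frac{1}{n+2}.\]
   Context: Setting: $P_X$ is a distribution on $\mathbb{R}^d$. Data $X_1,\dots,X_{2n}$ are i.i.d. from $P_X$; the training set $\mathcal{D}^{\mathrm{train}}=\{X_1,\dots,X_n\}$ is treated as fixed (all probabilities are conditional on it) and $\mathcal{D}^{\mathrm{cal}}=\{X_{n+1},\dots,X_{2n}\}$ is the calibration set; $\mathcal{D}=\mathcal{D}^{\mathrm{train}}\cup\mathcal{D}^{\mathrm{cal}}$. The score function $\hat s:\mathbb{R}^d\to\mathbb{R}$ is a fixed function determined by $\mathcal{D}^{\mathrm{train}}$. The marginal conformal p-value of a point $x$ is \[\hat{u}^{\mathrm{(marg)}}(x) = \frac{1 + |\{i \in \{n+1,\dots,2n\} : \hat{s}(X_i) \le \hat{s}(x)\}|}{n+1}.\] "$\hat s(X)$ is continuously distributed" means that for $X\sim P_X$ independent of the data, $\hat s(X)$ has an atomless distribution. *)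

theory Defs
  imports "HOL-Probability.Probability"
begin

text \<open>Marginal conformal p-value of a point x, computed from the calibration
  scores s(X_{n+1} w), ..., s(X_{2n} w).\<close>
definition umarg :: "nat \<Rightarrow> ('x \<Rightarrow> real) \<Rightarrow> (nat \<Rightarrow> 'w \<Rightarrow> 'x) \<Rightarrow> 'w \<Rightarrow> 'x \<Rightarrow> real" where
  "umarg n s X w x =
     (1 + real (card {k \<in> {n+1..2*n}. s (X k w) \<le> s x})) / (real n + 1)"

definition covar :: "'w measure \<Rightarrow> ('w \<Rightarrow> real) \<Rightarrow> ('w \<Rightarrow> real) \<Rightarrow> real" where
  "covar M Y Z = (\<integral>w. (Y w - (\<integral>v. Y v \<partial>M)) * (Z w - (\<integral>v. Z v \<partial>M)) \<partial>M)"

definition correl :: "'w measure \<Rightarrow> ('w \<Rightarrow> real) \<Rightarrow> ('w \<Rightarrow> real) \<Rightarrow> real" where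
  "correl M Y Z = covar M Y Z / sqrt (covar M Y Y * covar M Z Z)"

end

theory Submission
  imports Defs
begin


definition rk :: "nat set \<Rightarrow> (nat \<Rightarrow> real) \<Rightarrow> nat \<Rightarrow> nat" where
  "rk I y m = card {m'\<in>I. y m' \<le> y m}"

lemma rk_bij:
  assumes "finite I" "inj_on y I"
  shows "bij_betw (rk I y) I {1..card I}"
proof -
  have inj: "inj_on (rk I y) I"
  proof (rule inj_onI, rule ccontr)
    fix u v assume u: "u \<in> I" and v: "v \<in> I" and eq: "rk I y u = rk I y v" and ne: "u \<noteq> v"
    have "y u \<noteq> y v" using assms(2) u v ne by (auto dest: inj_onD)
    { fix u v assume u: "u \<in> I" and v: "v \<in> I" and lt: "y u < y v"
      have "{m'\<in>I. y m' \<le> y u} \<subseteq> {m'\<in>I. y m' \<le> y v}"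
        using lt by auto
      moreover have "v \<notin> {m'\<in>I. y m' \<le> y u}" using lt by auto
      ultimately have "{m'\<in>I. y m' \<le> y u} \<subset> {m'\<in>I. y m' \<le> y v}"
        using v by blast
      then have "rk I y u < rk I y v" unfolding rk_def
        by (intro psubset_card_mono) (use assms(1) in auto) }
    then show False using \<open>y u \<noteq> y v\<close> eq u v
      by (metis less_irrefl linorder_neq_iff)
  qed
  have sub: "rk I y ` I \<subseteq> {1..card I}"
  proof
    fix x assume "x \<in> rk I y ` I"
    then obtain m where m: "m \<in> I" "x = rk I y m" by auto
    have "m \<in> {m'\<in>I. y m' \<le> y m}" using m by auto
    then have "1 \<le> x" unfolding m rk_def using assms(1)
      by (metis (no_types, lifting) One_nat_def Suc_leI card_gt_0_iff empty_iff finite_subset mem_Collect_eq subsetI)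
    moreover have "x \<le> card I" unfolding m rk_def using assms(1) by (intro card_mono) auto
    ultimately show "x \<in> {1..card I}" by auto
  qed
  have "card (rk I y ` I) = card {1..card I}" using inj by (simp add: card_image)
  then have "rk I y ` I = {1..card I}" using sub by (intro card_subset_eq) auto
  then show ?thesis using inj by (simp add: bij_betw_def)
qed

lemma count_pairs:
  assumes "finite I" "inj_on y I" "p \<in> {1..card I}" "q \<in> {1..card I}" "p \<noteq> q"
  shows "(\<Sum>d\<in>Sigma I (\<lambda>m. I - {m}). (if rk I y (fst d) = p \<and> rk I y (snd d) = q then 1 else 0 :: real)) = 1"
proof -
  have b: "bij_betw (rk I y) I {1..card I}" by (rule rk_bij[OF assms(1,2)])
  obtain m0 where m0: "m0 \<in> I" "rk I y m0 = p" using b assms(3) by (metis bij_betw_iff_bijections)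
  obtain m1 where m1: "m1 \<in> I" "rk I y m1 = q" using b assms(4) by (metis bij_betw_iff_bijections)
  have inj: "inj_on (rk I y) I" using b by (simp add: bij_betw_def)
  have "m0 \<noteq> m1" using m0 m1 assms(5) by auto
  have "(\<Sum>d\<in>Sigma I (\<lambda>m. I - {m}). (if rk I y (fst d) = p \<and> rk I y (snd d) = q then 1 else 0 :: real))
      = (\<Sum>d\<in>Sigma I (\<lambda>m. I - {m}). (if d = (m0, m1) then 1 else 0 :: real))"
  proof (rule sum.cong[OF refl])
    fix d assume d: "d \<in> Sigma I (\<lambda>m. I - {m})"
    have "(rk I y (fst d) = p \<and> rk I y (snd d) = q) \<longleftrightarrow> d = (m0, m1)"
      using d m0 m1 inj by (auto dest: inj_onD)
    then show "(if rk I y (fst d) = p \<and> rk I y (snd d) = q then 1 else 0 :: real) = (if d = (m0, m1) then 1 else 0)"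
      by simp
  qed
  also have "\<dots> = 1" using m0 m1 \<open>m0 \<noteq> m1\<close> assms(1) by (simp add: finite_SigmaI)
  finally show ?thesis .
qed

lemma card_offdiag:
  assumes "finite I"
  shows "card (Sigma I (\<lambda>m. I - {m})) = card I * (card I - 1)"
proof -
  have "card (Sigma I (\<lambda>m. I - {m})) = (\<Sum>m\<in>I. card (I - {m}))"
    using assms by (intro card_SigmaI) auto
  also have "\<dots> = (\<Sum>m\<in>I. card I - 1)"
    using assms by (intro sum.cong refl) (simp add: card_Diff_singleton)
  also have "\<dots> = card I * (card I - 1)" by simp
  finally show ?thesis .
qed

lemma exists_perm:
  fixes I :: "'a set"
  assumes "a \<in> I" "b \<in> I" "a \<noteq> b" "m \<in> I" "m' \<in> I" "m \<noteq> m'"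
  shows "\<exists>\<pi>. bij_betw \<pi> I I \<and> \<pi> a = m \<and> \<pi> b = m'"
proof -
  define \<sigma> where "\<sigma> = Transposition.transpose a m"
  define c where "c = \<sigma> b"
  define \<tau> where "\<tau> = Transposition.transpose c m'"
  have c: "c \<in> I" "c \<noteq> m" using assms unfolding c_def \<sigma>_def by (auto simp: Transposition.transpose_def)
  have "bij_betw \<sigma> I I" unfolding \<sigma>_def using assms by (intro bij_betw_transpose_iff) auto
  moreover have "bij_betw \<tau> I I" unfolding \<tau>_def using assms c by (intro bij_betw_transpose_iff) auto
  ultimately have "bij_betw (\<tau> \<circ> \<sigma>) I I" by (rule bij_betw_trans)
  moreover have "(\<tau> \<circ> \<sigma>) a = m" using c assms unfolding \<tau>_def \<sigma>_def by (auto simp: Transposition.transpose_def)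
  moreover have "(\<tau> \<circ> \<sigma>) b = m'" using c assms unfolding \<tau>_def c_def by (auto simp: Transposition.transpose_def)
  ultimately show ?thesis by blast
qed

lemma rk_reindex:
  assumes "bij_betw \<pi> I I" "m \<in> I"
  shows "rk I (\<lambda>k. y (\<pi> k)) m = rk I y (\<pi> m)"
proof -
  have "{m'\<in>I. y m' \<le> y (\<pi> m)} = \<pi> ` {m'\<in>I. y (\<pi> m') \<le> y (\<pi> m)}"
    using assms(1) by (auto simp: bij_betw_def)
  moreover have "inj_on \<pi> {m'\<in>I. y (\<pi> m') \<le> y (\<pi> m)}"
    using assms(1) by (auto simp: bij_betw_def intro: inj_on_subset)
  ultimately show ?thesis unfolding rk_def by (simp add: card_image)
qed
lemma meas_cardle:
  fixes C I :: "nat set" assumes "C \<subseteq> I" "m \<in> I" and sN: "sets N = sets (PiM I (\<lambda>_. borel::real measure))"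
  shows "(\<lambda>y. card {i\<in>C. y i \<le> y m}) \<in> measurable N (count_space UNIV)"
proof -
  have "(\<lambda>y. card {i\<in>C. y i \<le> y m}) \<in> measurable (PiM I (\<lambda>_. borel::real measure)) (count_space UNIV)"
  proof (rule measurable_card)
    fix i
    show "{x \<in> space (PiM I (\<lambda>_. borel::real measure)). i \<in> {i \<in> C. x i \<le> x m}} \<in> sets (PiM I (\<lambda>_. borel::real measure))"
    proof (cases "i \<in> C")
      case True
      then have "i \<in> I" using assms by auto
      have "{x \<in> space (PiM I (\<lambda>_. borel::real measure)). x i \<le> x m} \<in> sets (PiM I (\<lambda>_. borel::real measure))"
        using measurable_component_singleton[OF \<open>i \<in> I\<close>, of "\<lambda>_. borel::real measure"]
          measurable_component_singleton[OF assms(2), of "\<lambda>_. borel::real measure"]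
        by (intro borel_measurable_le) auto
      then show ?thesis using True by simp
    qed simp
  qed
  then show ?thesis by (subst measurable_cong_sets[OF sN refl])
qed

lemma meas_eq_set:
  assumes "f \<in> measurable N (count_space UNIV)"
  shows "{y\<in>space N. f y = (p::nat)} \<in> sets N"
proof -
  have "f -` {p} \<inter> space N \<in> sets N" using assms by (rule measurable_sets) simp
  moreover have "f -` {p} \<inter> space N = {y\<in>space N. f y = p}" by auto
  ultimately show ?thesis by simp
qed

lemma Ev_sets:
  assumes "sets N = sets (PiM I (\<lambda>_. borel::real measure))" "m \<in> I" "m' \<in> I"
  shows "{y\<in>space N. rk I y m = p \<and> rk I y m' = q} \<in> sets N"
proof -
  have 1: "{y\<in>space N. rk I y m = p} \<in> sets N"
    unfolding rk_def by (rule meas_eq_set, rule meas_cardle[OF _ assms(2,1)]) simp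
  have 2: "{y\<in>space N. rk I y m' = q} \<in> sets N"
    unfolding rk_def by (rule meas_eq_set, rule meas_cardle[OF _ assms(3,1)]) simp
  have "{y\<in>space N. rk I y m = p \<and> rk I y m' = q} = {y\<in>space N. rk I y m = p} \<inter> {y\<in>space N. rk I y m' = q}" by auto
  then show ?thesis using 1 2 by auto
qed

lemma rk_restrict: "m \<in> I \<Longrightarrow> rk I (restrict y I) m = rk I y m"
  unfolding rk_def by (intro arg_cong[where f=card]) auto

lemma reindex_meas:
  assumes sN: "sets N = sets (PiM I (\<lambda>_. borel::real measure))" and "bij_betw \<pi> I I"
  shows "(\<lambda>y. \<lambda>k\<in>I. y (\<pi> k)) \<in> measurable N N"
proof -
  have "(\<lambda>y. \<lambda>k\<in>I. y (\<pi> k)) \<in> measurable (PiM I (\<lambda>_. borel::real measure)) (PiM I (\<lambda>_. borel::real measure))"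
  proof (rule measurable_restrict)
    fix k assume "k \<in> I"
    then have "\<pi> k \<in> I" using assms(2) by (auto simp: bij_betw_def)
    then show "(\<lambda>y. y (\<pi> k)) \<in> measurable (PiM I (\<lambda>_. borel::real measure)) borel"
      using measurable_component_singleton[of "\<pi> k" I "\<lambda>_. borel::real measure"] by simp
  qed
  then show ?thesis by (subst measurable_cong_sets[OF sN sN])
qed



lemma prob_rank:
  assumes N: "prob_space N" and sN: "sets N = sets (PiM I (\<lambda>_. borel::real measure))" and fin: "finite I"
    and ae: "AE y in N. inj_on y I"
    and inv: "\<And>\<pi>. bij_betw \<pi> I I \<Longrightarrow> distr N N (\<lambda>y. \<lambda>k\<in>I. y (\<pi> k)) = N"
    and ab: "a \<in> I" "b \<in> I" "a \<noteq> b" and pq: "p \<in> {1..card I}" "q \<in> {1..card I}" "p \<noteq> q"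
  shows "measure N {y\<in>space N. rk I y a = p \<and> rk I y b = q} = 1 / (real (card I) * (real (card I) - 1))"
proof -
  interpret prob_space N by (rule N)
  define E where "E = (\<lambda>d. {y\<in>space N. rk I y (fst d) = p \<and> rk I y (snd d) = q})"
  define D where "D = Sigma I (\<lambda>m. I - {m})"
  define \<mu> where "\<mu> = measure N {y\<in>space N. rk I y a = p \<and> rk I y b = q}"
  have Es: "E d \<in> sets N" if "d \<in> D" for d
    using that unfolding E_def D_def by (intro Ev_sets[OF sN]) auto
  have Emu: "measure N (E d) = \<mu>" if dD: "d \<in> D" for d
  proof -
    have dd: "fst d \<in> I" "snd d \<in> I" "fst d \<noteq> snd d"
      using dD unfolding D_def by (auto simp: mem_Sigma_iff)
    obtain \<pi> where \<pi>: "bij_betw \<pi> I I" "\<pi> a = fst d" "\<pi> b = snd d"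
      using exists_perm[OF ab dd] by blast
    define t where "t = (\<lambda>y::nat\<Rightarrow>real. \<lambda>k\<in>I. y (\<pi> k))"
    have tm: "t \<in> measurable N N" unfolding t_def by (rule reindex_meas[OF sN \<pi>(1)])
    have Eab: "{y\<in>space N. rk I y a = p \<and> rk I y b = q} \<in> sets N" by (rule Ev_sets[OF sN ab(1,2)])
    have "\<mu> = measure (distr N N t) {y\<in>space N. rk I y a = p \<and> rk I y b = q}"
      unfolding \<mu>_def t_def using inv[OF \<pi>(1)] by simp
    also have "\<dots> = measure N (t -` {y\<in>space N. rk I y a = p \<and> rk I y b = q} \<inter> space N)"
      by (rule measure_distr[OF tm Eab])
    also have "t -` {y\<in>space N. rk I y a = p \<and> rk I y b = q} \<inter> space N = E d"
    proof -
      have ts: "t y \<in> space N" if "y \<in> space N" for y using tm that by (auto dest: measurable_space)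
      have rka: "rk I (t y) a = rk I y (fst d)" for y
        unfolding t_def using rk_restrict[OF ab(1), of "\<lambda>k. y (\<pi> k)"] rk_reindex[OF \<pi>(1) ab(1), of y] \<pi> by simp
      have rkb: "rk I (t y) b = rk I y (snd d)" for y
        unfolding t_def using rk_restrict[OF ab(2), of "\<lambda>k. y (\<pi> k)"] rk_reindex[OF \<pi>(1) ab(2), of y] \<pi> by simp
      show ?thesis unfolding E_def
      proof (intro set_eqI iffI)
        fix y assume "y \<in> t -` {y \<in> space N. rk I y a = p \<and> rk I y b = q} \<inter> space N"
        then have "y \<in> space N" "rk I (t y) a = p" "rk I (t y) b = q" by simp_all
        then show "y \<in> {y \<in> space N. rk I y (fst d) = p \<and> rk I y (snd d) = q}"
          unfolding rka rkb by simp
      next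
        fix y assume "y \<in> {y \<in> space N. rk I y (fst d) = p \<and> rk I y (snd d) = q}"
        then have "y \<in> space N" "rk I y (fst d) = p" "rk I y (snd d) = q" by simp_all
        then show "y \<in> t -` {y \<in> space N. rk I y a = p \<and> rk I y b = q} \<inter> space N"
          using ts[of y] rka[of y] rkb[of y] by simp
      qed
    qed
    finally show ?thesis by simp
  qed
  have intg: "integrable N (indicator (E d) :: _ \<Rightarrow> real)" if "d \<in> D" for d
  proof (rule integrable_real_indicator)
    show "E d \<in> sets N" using Es that .
    show "emeasure N (E d) < \<infinity>" by (simp add: less_top[symmetric] emeasure_finite)
  qed
  have int: "(\<integral>y. (\<Sum>d\<in>D. indicator (E d) y) \<partial>N) = (\<Sum>d\<in>D. measure N (E d))"
  proof -
    have "(\<integral>y. (\<Sum>d\<in>D. indicator (E d) y) \<partial>N) = (\<Sum>d\<in>D. (\<integral>y. indicator (E d) y \<partial>N) :: real)"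
      by (rule Bochner_Integration.integral_sum) (erule intg)
    also have "\<dots> = (\<Sum>d\<in>D. measure N (E d))"
      using Es by (intro sum.cong refl) (simp add: Int_absorb2 sets.sets_into_space)
    finally show ?thesis .
  qed
  have ae1: "AE y in N. (\<Sum>d\<in>D. indicator (E d) y) = (1::real)"
    using ae AE_space
  proof eventually_elim
    case (elim y)
    have "(\<Sum>d\<in>D. indicator (E d) y) = (\<Sum>d\<in>D. (if rk I y (fst d) = p \<and> rk I y (snd d) = q then 1 else 0 :: real))"
      using elim by (intro sum.cong refl) (auto simp: E_def indicator_def)
    also have "\<dots> = 1" unfolding D_def by (rule count_pairs[OF fin elim(1) pq])
    finally show ?case .
  qed
  have "(\<integral>y. (\<Sum>d\<in>D. indicator (E d) y) \<partial>N) = (\<integral>y. (1::real) \<partial>N)"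
  proof (rule integral_cong_AE)
    show "(\<lambda>y. \<Sum>d\<in>D. indicator (E d) y :: real) \<in> borel_measurable N"
      by (rule borel_measurable_sum, rule borel_measurable_indicator, erule Es)
  qed (simp_all add: ae1)
  also have "\<dots> = 1" by (simp add: prob_space)
  finally have "(\<Sum>d\<in>D. measure N (E d)) = 1" using int by simp
  moreover have "(\<Sum>d\<in>D. measure N (E d)) = real (card D) * \<mu>" using Emu by simp
  moreover have "card D = card I * (card I - 1)" unfolding D_def by (rule card_offdiag[OF fin])
  moreover have "card I \<ge> 1" using pq by auto
  ultimately have X: "real (card I) * (real (card I) - 1) * \<mu> = 1" by (simp add: of_nat_diff)
  then have "real (card I) * (real (card I) - 1) \<noteq> 0" by (metis mult_zero_left zero_neq_one)
  then have "\<mu> = 1 / (real (card I) * (real (card I) - 1))"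
    using X by (metis nonzero_mult_div_cancel_left)
  then show ?thesis unfolding \<mu>_def .
qed



lemma rk_decomp:
  fixes y :: "nat \<Rightarrow> real"
  assumes fin: "finite Cal" and I: "I = Cal \<union> {a, b}" and ab: "a \<notin> Cal" "b \<notin> Cal" "a \<noteq> b"
    and inj: "inj_on y I"
  shows "rk I y a = 1 + card {c\<in>Cal. y c \<le> y a} + (if y b < y a then 1 else 0)"
proof -
  have ne: "y b \<noteq> y a"
  proof
    assume "y b = y a"
    then have "b = a" by (rule inj_onD[OF inj]) (use I in auto)
    then show False using ab(3) by simp
  qed
  have eq: "{m\<in>I. y m \<le> y a} = insert a ({c\<in>Cal. y c \<le> y a} \<union> (if y b < y a then {b} else {}))"
    using ne I by (auto split: if_splits)
  have "card (insert a ({c\<in>Cal. y c \<le> y a} \<union> (if y b < y a then {b} else {}))) =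
        1 + card ({c\<in>Cal. y c \<le> y a} \<union> (if y b < y a then {b} else {}))"
    using ab fin by (subst card_insert_disjoint) auto
  also have "card ({c\<in>Cal. y c \<le> y a} \<union> (if y b < y a then {b} else {})) =
             card {c\<in>Cal. y c \<le> y a} + card (if y b < y a then {b} else {})"
    using ab fin by (intro card_Un_disjoint) auto
  finally show ?thesis unfolding rk_def eq by simp
qed

lemma event_equiv:
  fixes y :: "nat \<Rightarrow> real"
  assumes fin: "finite Cal" and I: "I = Cal \<union> {a, b}" and ab: "a \<notin> Cal" "b \<notin> Cal" "a \<noteq> b"
    and inj: "inj_on y I"
  shows "(1 + card {c\<in>Cal. y c \<le> y a} = k \<and> 1 + card {c\<in>Cal. y c \<le> y b} = l) \<longleftrightarrow>
         ((k \<le> l \<and> rk I y a = k \<and> rk I y b = l + 1) \<or> (l \<le> k \<and> rk I y a = k + 1 \<and> rk I y b = l))"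
proof -
  have ra: "rk I y a = 1 + card {c\<in>Cal. y c \<le> y a} + (if y b < y a then 1 else 0)"
    by (rule rk_decomp[OF fin I ab inj])
  have I': "I = Cal \<union> {b, a}" using I by auto
  have inj': "inj_on y I" using inj .
  have rb: "rk I y b = 1 + card {c\<in>Cal. y c \<le> y b} + (if y a < y b then 1 else 0)"
    by (rule rk_decomp[OF fin I' ab(2,1) ab(3)[symmetric] inj'])
  have ne: "y b \<noteq> y a"
  proof
    assume "y b = y a"
    then have "b = a" by (rule inj_onD[OF inj]) (use I in auto)
    then show False using ab(3) by simp
  qed
  show ?thesis
  proof (cases "y a < y b")
    case True
    have "card {c\<in>Cal. y c \<le> y a} \<le> card {c\<in>Cal. y c \<le> y b}"
      using True fin by (intro card_mono) auto
    then show ?thesis using ra rb True by auto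
  next
    case False
    then have lt: "y b < y a" using ne by auto
    have "card {c\<in>Cal. y c \<le> y b} \<le> card {c\<in>Cal. y c \<le> y a}"
      using lt fin by (intro card_mono) auto
    then show ?thesis using ra rb lt False by auto
  qed
qed

lemma joint_prob:
  fixes I Cal :: "nat set"
  assumes N: "prob_space N" and sN: "sets N = sets (PiM I (\<lambda>_. borel::real measure))"
    and fin: "finite Cal" and I: "I = Cal \<union> {a, b}" and ab: "a \<notin> Cal" "b \<notin> Cal" "a \<noteq> b"
    and cardC: "card Cal = n"
    and ae: "AE y in N. inj_on y I"
    and inv: "\<And>\<pi>. bij_betw \<pi> I I \<Longrightarrow> distr N N (\<lambda>y. \<lambda>k\<in>I. y (\<pi> k)) = N"
    and kl: "k \<in> {1..n+1}" "l \<in> {1..n+1}"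
  shows "measure N {y\<in>space N. 1 + card {c\<in>Cal. y c \<le> y a} = k \<and> 1 + card {c\<in>Cal. y c \<le> y b} = l}
         = 1 / ((real n + 2) * (real n + 1)) + (if k = l then 1 / ((real n + 2) * (real n + 1)) else 0)"
proof -
  interpret prob_space N by (rule N)
  define c where "c = 1 / ((real n + 2) * (real n + 1))"
  have finI: "finite I" using I fin by simp
  have cardI: "card I = n + 2" using I fin ab cardC by (simp add: card_insert_if)
  have aI: "a \<in> I" and bI: "b \<in> I" and CI: "Cal \<subseteq> I" using I by auto
  define L where "L = {y\<in>space N. 1 + card {c\<in>Cal. y c \<le> y a} = k \<and> 1 + card {c\<in>Cal. y c \<le> y b} = l}"
  define A1 where "A1 = (if k \<le> l then {y\<in>space N. rk I y a = k \<and> rk I y b = l + 1} else {})"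
  define A2 where "A2 = (if l \<le> k then {y\<in>space N. rk I y a = k + 1 \<and> rk I y b = l} else {})"
  have A1s: "A1 \<in> sets N" unfolding A1_def using Ev_sets[OF sN aI bI] by simp
  have A2s: "A2 \<in> sets N" unfolding A2_def using Ev_sets[OF sN aI bI] by simp
  have Ls: "L \<in> sets N"
  proof -
    have 1: "{y\<in>space N. card {c\<in>Cal. y c \<le> y a} = k - 1} \<in> sets N"
      by (rule meas_eq_set, rule meas_cardle[OF CI aI sN])
    have 2: "{y\<in>space N. card {c\<in>Cal. y c \<le> y b} = l - 1} \<in> sets N"
      by (rule meas_eq_set, rule meas_cardle[OF CI bI sN])
    have "L = {y\<in>space N. card {c\<in>Cal. y c \<le> y a} = k - 1} \<inter> {y\<in>space N. card {c\<in>Cal. y c \<le> y b} = l - 1}"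
      unfolding L_def using kl by auto
    then show ?thesis using 1 2 by simp
  qed
  have "measure N L = measure N (A1 \<union> A2)"
  proof (rule measure_eq_AE)
    show "AE x in N. (x \<in> L) = (x \<in> A1 \<union> A2)"
      using ae AE_space
    proof eventually_elim
      case (elim y)
      show ?case using event_equiv[OF fin I ab elim(1), of k l] elim(2)
        unfolding L_def A1_def A2_def by auto
    qed
  qed (use Ls A1s A2s in auto)
  also have "\<dots> = measure N A1 + measure N A2"
    by (rule finite_measure_Union[OF A1s A2s]) (auto simp: A1_def A2_def)
  also have "measure N A1 = (if k \<le> l then c else 0)"
  proof (cases "k \<le> l")
    case True
    have "measure N {y\<in>space N. rk I y a = k \<and> rk I y b = l + 1} = 1 / (real (card I) * (real (card I) - 1))"
      by (rule prob_rank[OF N sN finI ae inv aI bI ab(3)]) (use kl True cardI in auto)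
    then show ?thesis using True cardI unfolding A1_def c_def by (simp add: algebra_simps)
  qed (simp add: A1_def)
  also have "measure N A2 = (if l \<le> k then c else 0)"
  proof (cases "l \<le> k")
    case True
    have "measure N {y\<in>space N. rk I y a = k + 1 \<and> rk I y b = l} = 1 / (real (card I) * (real (card I) - 1))"
      by (rule prob_rank[OF N sN finI ae inv aI bI ab(3)]) (use kl True cardI in auto)
    then show ?thesis using True cardI unfolding A2_def c_def by (simp add: algebra_simps)
  qed (simp add: A2_def)
  finally show ?thesis unfolding L_def c_def by auto
qed



lemma double_delta:
  fixes f :: "nat \<Rightarrow> nat \<Rightarrow> real"
  assumes "finite K" "u \<in> K" "v \<in> K"
  shows "(\<Sum>k\<in>K. \<Sum>l\<in>K. f k l * (if u = k \<and> v = l then 1 else 0)) = f u v"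
proof -
  have "(\<Sum>k\<in>K. \<Sum>l\<in>K. f k l * (if u = k \<and> v = l then 1 else 0)) = (\<Sum>k\<in>K. if u = k then f k v else 0)"
  proof (rule sum.cong[OF refl])
    fix k assume "k \<in> K"
    have "(\<Sum>l\<in>K. f k l * (if u = k \<and> v = l then 1 else 0)) = (\<Sum>l\<in>K. if v = l then (if u = k then f k l else 0) else 0)"
      by (intro sum.cong refl) auto
    also have "\<dots> = (if u = k then f k v else 0)" using assms by simp
    finally show "(\<Sum>l\<in>K. f k l * (if u = k \<and> v = l then 1 else 0)) = (if u = k then f k v else 0)" .
  qed
  also have "\<dots> = f u v" using assms by simp
  finally show ?thesis .
qed

lemma EF:
  fixes I Cal :: "nat set" and f :: "nat \<Rightarrow> nat \<Rightarrow> real"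
  assumes N: "prob_space N" and sN: "sets N = sets (PiM I (\<lambda>_. borel::real measure))"
    and fin: "finite Cal" and I: "I = Cal \<union> {a, b}" and ab: "a \<notin> Cal" "b \<notin> Cal" "a \<noteq> b"
    and cardC: "card Cal = n"
    and ae: "AE y in N. inj_on y I"
    and inv: "\<And>\<pi>. bij_betw \<pi> I I \<Longrightarrow> distr N N (\<lambda>y. \<lambda>k\<in>I. y (\<pi> k)) = N"
  shows "(\<integral>y. f (1 + card {c\<in>Cal. y c \<le> y a}) (1 + card {c\<in>Cal. y c \<le> y b}) \<partial>N)
       = (\<Sum>k\<in>{1..n+1}. \<Sum>l\<in>{1..n+1}. f k l * (1 / ((real n + 2) * (real n + 1)) + (if k = l then 1 / ((real n + 2) * (real n + 1)) else 0)))"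
proof -
  interpret prob_space N by (rule N)
  define K where "K = {1..n+1}"
  define RA where "RA y = 1 + card {c\<in>Cal. y c \<le> y a}" for y :: "nat \<Rightarrow> real"
  define RB where "RB y = 1 + card {c\<in>Cal. y c \<le> y b}" for y :: "nat \<Rightarrow> real"
  define Ekl where "Ekl k l = {y\<in>space N. RA y = k \<and> RB y = l}" for k l
  have aI: "a \<in> I" and bI: "b \<in> I" and CI: "Cal \<subseteq> I" using I by auto
  have finK: "finite K" unfolding K_def by simp
  have RAK: "RA y \<in> K" for y
  proof -
    have "card {c\<in>Cal. y c \<le> y a} \<le> card Cal" using fin by (intro card_mono) auto
    then show ?thesis unfolding RA_def K_def using cardC by auto
  qed
  have RBK: "RB y \<in> K" for y
  proof -
    have "card {c\<in>Cal. y c \<le> y b} \<le> card Cal" using fin by (intro card_mono) auto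
    then show ?thesis unfolding RB_def K_def using cardC by auto
  qed
  have Es: "Ekl k l \<in> sets N" if "k \<in> K" "l \<in> K" for k l
  proof -
    have 1: "{y\<in>space N. card {c\<in>Cal. y c \<le> y a} = k - 1} \<in> sets N"
      by (rule meas_eq_set, rule meas_cardle[OF CI aI sN])
    have 2: "{y\<in>space N. card {c\<in>Cal. y c \<le> y b} = l - 1} \<in> sets N"
      by (rule meas_eq_set, rule meas_cardle[OF CI bI sN])
    have "Ekl k l = {y\<in>space N. card {c\<in>Cal. y c \<le> y a} = k - 1} \<inter> {y\<in>space N. card {c\<in>Cal. y c \<le> y b} = l - 1}"
      unfolding Ekl_def RA_def RB_def using that unfolding K_def by auto
    then show ?thesis using 1 2 by simp
  qed
  have Em: "measure N (Ekl k l) = 1 / ((real n + 2) * (real n + 1)) + (if k = l then 1 / ((real n + 2) * (real n + 1)) else 0)"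
    if "k \<in> K" "l \<in> K" for k l
    unfolding Ekl_def RA_def RB_def
    by (rule joint_prob[OF N sN fin I ab cardC ae inv]) (use that in \<open>auto simp: K_def\<close>)
  have intg: "integrable N (\<lambda>y. f k l * indicator (Ekl k l) y :: real)" if "k \<in> K" "l \<in> K" for k l
    using Es[OF that] by (intro integrable_mult_right integrable_real_indicator) (simp_all add: less_top[symmetric])
  have "(\<integral>y. f (RA y) (RB y) \<partial>N) = (\<integral>y. (\<Sum>k\<in>K. \<Sum>l\<in>K. f k l * indicator (Ekl k l) y) \<partial>N)"
  proof (rule Bochner_Integration.integral_cong[OF refl])
    fix y assume y: "y \<in> space N"
    have "(\<Sum>k\<in>K. \<Sum>l\<in>K. f k l * indicator (Ekl k l) y) = (\<Sum>k\<in>K. \<Sum>l\<in>K. f k l * (if RA y = k \<and> RB y = l then 1 else 0))"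
      using y by (intro sum.cong refl) (auto simp: Ekl_def indicator_def)
    also have "\<dots> = f (RA y) (RB y)" by (rule double_delta[OF finK RAK RBK])
    finally show "f (RA y) (RB y) = (\<Sum>k\<in>K. \<Sum>l\<in>K. f k l * indicator (Ekl k l) y)" by simp
  qed
  also have "\<dots> = (\<Sum>k\<in>K. (\<integral>y. (\<Sum>l\<in>K. f k l * indicator (Ekl k l) y) \<partial>N))"
    by (rule Bochner_Integration.integral_sum) (auto intro!: Bochner_Integration.integrable_sum intg)
  also have "\<dots> = (\<Sum>k\<in>K. \<Sum>l\<in>K. (\<integral>y. f k l * indicator (Ekl k l) y \<partial>N))"
    by (intro sum.cong refl Bochner_Integration.integral_sum intg) auto
  also have "\<dots> = (\<Sum>k\<in>K. \<Sum>l\<in>K. f k l * measure N (Ekl k l))"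
  proof (intro sum.cong refl)
    fix k l assume "k \<in> K" "l \<in> K"
    then have "Ekl k l \<inter> space N = Ekl k l" using Es sets.sets_into_space by blast
    moreover have "integrable N (indicator (Ekl k l) :: _ \<Rightarrow> real)"
      using Es[OF \<open>k \<in> K\<close> \<open>l \<in> K\<close>] by (intro integrable_real_indicator) (simp_all add: less_top[symmetric])
    ultimately show "(\<integral>y. f k l * indicator (Ekl k l) y \<partial>N) = f k l * measure N (Ekl k l)"
      by simp
  qed
  also have "\<dots> = (\<Sum>k\<in>K. \<Sum>l\<in>K. f k l * (1 / ((real n + 2) * (real n + 1)) + (if k = l then 1 / ((real n + 2) * (real n + 1)) else 0)))"
    by (intro sum.cong refl) (simp add: Em)
  finally show ?thesis unfolding RA_def RB_def K_def .
qed



lemma ties_zero: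
  fixes U V :: "'w \<Rightarrow> real" and M :: "'w measure" and Q :: "real measure"
  assumes M: "prob_space M" and ind: "prob_space.indep_var M borel U borel V"
    and dV: "distr M borel V = Q" and atom: "\<And>t. emeasure Q {t} = 0"
  shows "measure M {w\<in>space M. U w = V w} = 0"
proof -
  interpret prob_space M by (rule M)
  have rvU: "U \<in> borel_measurable M" using ind by (blast dest: indep_var_rv1)
  have rvV: "V \<in> borel_measurable M" using ind by (blast dest: indep_var_rv2)
  have pair: "distr M borel U \<Otimes>\<^sub>M distr M borel V = distr M (borel \<Otimes>\<^sub>M borel) (\<lambda>x. (U x, V x))"
    using ind indep_var_distribution_eq by blast
  define Dg where "Dg = {p \<in> space (borel \<Otimes>\<^sub>M borel :: (real \<times> real) measure). fst p = snd p}"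
  have Dgs: "Dg \<in> sets (borel \<Otimes>\<^sub>M borel :: (real \<times> real) measure)" unfolding Dg_def
    by (rule measurable_equality_set) simp_all
  have pm: "(\<lambda>x. (U x, V x)) \<in> measurable M (borel \<Otimes>\<^sub>M borel)" using rvU rvV by measurable
  have "measure M {w\<in>space M. U w = V w} = measure (distr M (borel \<Otimes>\<^sub>M borel) (\<lambda>x. (U x, V x))) Dg"
    by (subst measure_distr[OF pm Dgs]) (auto simp: Dg_def space_pair_measure intro!: arg_cong[where f="measure M"])
  also have "\<dots> = measure (distr M borel U \<Otimes>\<^sub>M Q) Dg" using pair dV by simp
  also have "\<dots> = 0"
  proof -
    interpret Q: prob_space Q using prob_space_distr[OF rvV] dV by simp
    have sQ: "sets Q = sets borel" using dV[symmetric] by simp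
    have Dgs': "Dg \<in> sets (distr M borel U \<Otimes>\<^sub>M Q)"
      using Dgs sets_pair_measure_cong[of "distr M borel U" borel Q borel] sQ by simp
    have "emeasure (distr M borel U \<Otimes>\<^sub>M Q) Dg = (\<integral>\<^sup>+x. emeasure Q (Pair x -` Dg) \<partial>distr M borel U)"
      by (rule Q.emeasure_pair_measure_alt[OF Dgs'])
    also have "\<dots> = (\<integral>\<^sup>+x. 0 \<partial>distr M borel U)"
    proof (rule nn_integral_cong)
      fix x
      have "Pair x -` Dg = {x}" unfolding Dg_def by (auto simp: space_pair_measure)
      then show "emeasure Q (Pair x -` Dg) = 0" using atom by simp
    qed
    also have "\<dots> = 0" by simp
    finally show ?thesis by (simp add: measure_def)
  qed
  finally show ?thesis .
qed

lemma correl_distr: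
  fixes T :: "'w \<Rightarrow> 'b" and f g :: "'b \<Rightarrow> real"
  assumes T: "T \<in> measurable M N" and f: "f \<in> borel_measurable N" and g: "g \<in> borel_measurable N"
  shows "correl M (\<lambda>w. f (T w)) (\<lambda>w. g (T w)) = correl (distr M N T) f g"
proof -
  have m: "integral\<^sup>L (distr M N T) h = (\<integral>w. h (T w) \<partial>M)" if "h \<in> borel_measurable N" for h :: "'b \<Rightarrow> real"
    by (rule integral_distr[OF T that])
  have cv: "covar M (\<lambda>w. u (T w)) (\<lambda>w. v (T w)) = covar (distr M N T) u v"
    if u: "u \<in> borel_measurable N" and v: "v \<in> borel_measurable N" for u v
  proof -
    have "(\<lambda>y. (u y - integral\<^sup>L (distr M N T) u) * (v y - integral\<^sup>L (distr M N T) v)) \<in> borel_measurable N"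
      using u v by measurable
    then show ?thesis unfolding covar_def using m[OF u] m[OF v] m by simp
  qed
  show ?thesis unfolding correl_def using cv[OF f g] cv[OF f f] cv[OF g g] by simp
qed



lemma E_split:
  fixes f :: "nat \<Rightarrow> nat \<Rightarrow> real"
  assumes "finite K"
  shows "(\<Sum>k\<in>K. \<Sum>l\<in>K. f k l * (c + (if k = l then c else 0))) = c * (\<Sum>k\<in>K. \<Sum>l\<in>K. f k l) + c * (\<Sum>k\<in>K. f k k)"
proof -
  have "(\<Sum>l\<in>K. f k l * (c + (if k = l then c else 0))) = c * (\<Sum>l\<in>K. f k l) + c * f k k" if "k \<in> K" for k
  proof -
    have "(\<Sum>l\<in>K. f k l * (c + (if k = l then c else 0))) = (\<Sum>l\<in>K. c * f k l + (if k = l then c * f k l else 0))"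
      by (intro sum.cong refl) (auto simp: algebra_simps)
    also have "\<dots> = c * (\<Sum>l\<in>K. f k l) + c * f k k"
      using assms that by (simp add: sum.distrib sum_distrib_left)
    finally show ?thesis .
  qed
  then have "(\<Sum>k\<in>K. \<Sum>l\<in>K. f k l * (c + (if k = l then c else 0))) = (\<Sum>k\<in>K. c * (\<Sum>l\<in>K. f k l) + c * f k k)"
    by (intro sum.cong refl) auto
  also have "\<dots> = c * (\<Sum>k\<in>K. \<Sum>l\<in>K. f k l) + c * (\<Sum>k\<in>K. f k k)"
    by (simp add: sum.distrib sum_distrib_left)
  finally show ?thesis .
qed

lemma corr_alg:
  fixes g :: "nat \<Rightarrow> real" and n :: nat and K :: "nat set" and c :: real
  assumes K: "K = {1..n+1}" and c: "c = 1 / ((real n + 2) * (real n + 1))"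
    and E: "E = (\<lambda>f. \<Sum>k\<in>K. \<Sum>l\<in>K. f k l * (c + (if k = l then c else 0)))"
    and nc: "\<exists>k\<in>K. \<exists>l\<in>K. g k \<noteq> g l"
  shows "E (\<lambda>k l. (g k - E (\<lambda>k l. g k)) * (g l - E (\<lambda>k l. g l))) /
           sqrt (E (\<lambda>k l. (g k - E (\<lambda>k l. g k)) * (g k - E (\<lambda>k l. g k))) *
                 E (\<lambda>k l. (g l - E (\<lambda>k l. g l)) * (g l - E (\<lambda>k l. g l)))) = 1 / (real n + 2)"
proof -
  have fin: "finite K" using K by simp
  have cK: "card K = n + 1" using K by simp
  have Es: "E f = c * (\<Sum>k\<in>K. \<Sum>l\<in>K. f k l) + c * (\<Sum>k\<in>K. f k k)" for f
    unfolding E by (rule E_split[OF fin])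
  define \<mu> where "\<mu> = (\<Sum>k\<in>K. g k) / (real n + 1)"
  have cn: "c * (real n + 2) = 1 / (real n + 1)"
  proof -
    have "0 \<le> real n * real n" by simp
    then have "2 + (real n * real n + real n * 3) \<noteq> 0" by linarith
    then show ?thesis unfolding c by (simp add: field_simps)
  qed
  have m1: "E (\<lambda>k l. g k) = \<mu>"
  proof -
    have "E (\<lambda>k l. g k) = c * (\<Sum>k\<in>K. real (card K) * g k) + c * (\<Sum>k\<in>K. g k)" unfolding Es by simp
    also have "(\<Sum>k\<in>K. real (card K) * g k) = real (card K) * (\<Sum>k\<in>K. g k)" by (simp add: sum_distrib_left)
    also have "c * (real (card K) * (\<Sum>k\<in>K. g k)) + c * (\<Sum>k\<in>K. g k) = c * (real n + 2) * (\<Sum>k\<in>K. g k)" using cK by (simp add: algebra_simps)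
    finally show ?thesis unfolding \<mu>_def cn by simp
  qed
  have m2: "E (\<lambda>k l. g l) = \<mu>"
  proof -
    have "E (\<lambda>k l. g l) = c * (\<Sum>k\<in>K. (\<Sum>l\<in>K. g l)) + c * (\<Sum>k\<in>K. g k)" unfolding Es by simp
    also have "\<dots> = c * (real n + 2) * (\<Sum>k\<in>K. g k)" using cK by (simp add: algebra_simps)
    finally show ?thesis unfolding \<mu>_def cn by simp
  qed
  define h where "h k = g k - \<mu>" for k
  define S where "S = (\<Sum>k\<in>K. h k * h k)"
  have sh: "(\<Sum>k\<in>K. h k) = 0"
  proof -
    have "(\<Sum>k\<in>K. h k) = (\<Sum>k\<in>K. g k) - real (card K) * \<mu>" unfolding h_def by (simp add: sum_subtractf)
    also have "real (card K) * \<mu> = (\<Sum>k\<in>K. g k)"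
    proof -
      have nz: "real n + 1 \<noteq> 0" by linarith
      have "real (card K) = real n + 1" using cK by simp
      then show ?thesis unfolding \<mu>_def using nz by simp
    qed
    finally show ?thesis by simp
  qed
  have cov: "E (\<lambda>k l. h k * h l) = c * S"
  proof -
    have "(\<Sum>k\<in>K. \<Sum>l\<in>K. h k * h l) = (\<Sum>k\<in>K. h k) * (\<Sum>l\<in>K. h l)" by (simp add: sum_product)
    then show ?thesis unfolding Es S_def using sh by simp
  qed
  have v1: "E (\<lambda>k l. h k * h k) = S / (real n + 1)"
  proof -
    have "E (\<lambda>k l. h k * h k) = c * (real (card K) * S) + c * S" unfolding Es S_def by (simp add: sum_distrib_left)
    also have "\<dots> = c * (real n + 2) * S" using cK by (simp add: algebra_simps)
    finally show ?thesis using cn by simp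
  qed
  have v2: "E (\<lambda>k l. h l * h l) = S / (real n + 1)"
  proof -
    have "E (\<lambda>k l. h l * h l) = c * (real (card K) * S) + c * S" unfolding Es S_def by simp
    also have "\<dots> = c * (real n + 2) * S" using cK by (simp add: algebra_simps)
    finally show ?thesis using cn by simp
  qed
  have Spos: "S > 0"
  proof -
    obtain k l where kl: "k \<in> K" "l \<in> K" "g k \<noteq> g l" using nc by auto
    have "h k \<noteq> 0 \<or> h l \<noteq> 0" using kl(3) unfolding h_def by auto
    then obtain m where m: "m \<in> K" "h m \<noteq> 0" using kl by auto
    have "S \<ge> h m * h m" unfolding S_def
      using m fin by (intro member_le_sum) auto
    moreover have "h m * h m > 0" using m(2) by (metis not_real_square_gt_zero)
    ultimately show ?thesis by simp
  qed
  have eA: "E (\<lambda>k l. (g k - E (\<lambda>k l. g k)) * (g l - E (\<lambda>k l. g l))) = c * S"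
    unfolding m1 m2 using cov unfolding h_def by simp
  have eB: "E (\<lambda>k l. (g k - E (\<lambda>k l. g k)) * (g k - E (\<lambda>k l. g k))) = S / (real n + 1)"
    unfolding m1 using v1 unfolding h_def by simp
  have eC: "E (\<lambda>k l. (g l - E (\<lambda>k l. g l)) * (g l - E (\<lambda>k l. g l))) = S / (real n + 1)"
    unfolding m2 using v2 unfolding h_def by simp
  have sq: "sqrt (S / (real n + 1) * (S / (real n + 1))) = S / (real n + 1)"
    by (subst real_sqrt_abs2) (use Spos in simp)
  have "c * S / (S / (real n + 1)) = c * (real n + 1)" using Spos by simp
  also have "\<dots> = 1 / (real n + 2)"
  proof -
    have "real n + 2 \<noteq> 0" "real n + 1 \<noteq> 0" by linarith+
    then show ?thesis unfolding c by simp
  qed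
  finally show ?thesis unfolding eA eB eC sq .
qed



theorem lemma1:
  fixes M :: "'w measure" and P :: "(real^'d) measure"
    and X :: "nat \<Rightarrow> 'w \<Rightarrow> real^'d" and s :: "real^'d \<Rightarrow> real"
    and G :: "real \<Rightarrow> real" and n i j :: nat
  assumes "prob_space M" and "prob_space P" and "sets P = sets borel"
    and "s \<in> borel_measurable borel"
    and cont: "\<And>t. measure P (s -` {t}) = 0"
    and "i \<ge> 1" and "j \<ge> 1" and "i \<noteq> j"
    and indep: "prob_space.indep_vars M (\<lambda>_. borel) X ({n+1..2*n} \<union> {2*n+i, 2*n+j})"
    and distr: "\<And>k. k \<in> {n+1..2*n} \<union> {2*n+i, 2*n+j} \<Longrightarrow> distr M borel (X k) = P"
    and nonconst: "\<exists>k\<in>{1..n+1}. \<exists>l\<in>{1..n+1}. G (real k / (real n + 1)) \<noteq> G (real l / (real n + 1))"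
  shows "correl M (\<lambda>w. G (umarg n s X w (X (2*n+i) w))) (\<lambda>w. G (umarg n s X w (X (2*n+j) w)))
         = 1 / (real n + 2)"
proof -
  interpret M: prob_space M by fact
  interpret P: prob_space P by fact
  define a where "a = 2*n+i"
  define b where "b = 2*n+j"
  define Cal where "Cal = {n+1..2*n}"
  define I where "I = Cal \<union> {a, b}"
  have ab: "a \<notin> Cal" "b \<notin> Cal" "a \<noteq> b" using assms(6,7,8) unfolding a_def b_def Cal_def by auto
  have finC: "finite Cal" and cardC: "card Cal = n" unfolding Cal_def by auto
  have finI: "finite I" unfolding I_def using finC by simp
  have aI: "a \<in> I" and bI: "b \<in> I" and CI: "Cal \<subseteq> I" unfolding I_def by auto
  have Ieq: "{n+1..2*n} \<union> {2*n+i, 2*n+j} = I" unfolding I_def Cal_def a_def b_def by simp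
  have indI: "M.indep_vars (\<lambda>_. borel) X I" using indep unfolding Ieq .
  have distrI: "distr M borel (X k) = P" if "k \<in> I" for k using distr that unfolding Ieq by blast
  have rvX: "X k \<in> borel_measurable M" if "k \<in> I" for k
    using indI that unfolding M.indep_vars_def by blast
  have sP: "sets P = sets borel" by fact
  have spP: "space P = UNIV" using sets_eq_imp_space_eq[OF sP] by simp
  have smeas: "s \<in> borel_measurable borel" by fact
  define Q where "Q = distr P borel s"
  have sPs: "s \<in> borel_measurable P" using smeas by (subst measurable_cong_sets[OF sP refl])
  have probQ: "prob_space Q" unfolding Q_def by (rule P.prob_space_distr[OF sPs])
  have atom: "emeasure Q {t} = 0" for t
  proof -
    have "emeasure Q {t} = emeasure P (s -` {t} \<inter> space P)"
      unfolding Q_def by (rule emeasure_distr[OF sPs]) simp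
    also have "\<dots> = emeasure P (s -` {t})" using spP by simp
    also have "\<dots> = ennreal (measure P (s -` {t}))" by (rule P.emeasure_eq_measure)
    finally show ?thesis using cont by simp
  qed
  define Y where "Y k = (\<lambda>w. s (X k w))" for k
  have indY: "M.indep_vars (\<lambda>_. borel) Y I"
    unfolding Y_def by (rule M.indep_vars_compose2[OF indI]) (use smeas in simp)
  have rvY: "Y k \<in> borel_measurable M" if "k \<in> I" for k
    unfolding Y_def using rvX[OF that] smeas by measurable
  have distrY: "distr M borel (Y k) = Q" if "k \<in> I" for k
  proof -
    have "distr (distr M borel (X k)) borel s = distr M borel (s \<circ> X k)"
      by (rule distr_distr[OF smeas rvX[OF that]])
    then show ?thesis unfolding Q_def Y_def using distrI[OF that] by (simp add: comp_def)
  qed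
  define Pi where "Pi = PiM I (\<lambda>_. Q)"
  have sQ: "sets Q = sets borel" unfolding Q_def by simp
  have sPi: "sets Pi = sets (PiM I (\<lambda>_. borel::real measure))"
    unfolding Pi_def by (rule sets_PiM_cong) (simp_all add: sQ)
  have probPi: "prob_space Pi" unfolding Pi_def by (rule prob_space_PiM) (rule probQ)
  define Yv where "Yv w = (\<lambda>k\<in>I. Y k w)" for w
  have Yvm0: "Yv \<in> measurable M (PiM I (\<lambda>_. borel::real measure))"
    unfolding Yv_def by (rule measurable_restrict) (rule rvY)
  have Yvm: "Yv \<in> measurable M Pi" using Yvm0 by (subst measurable_cong_sets[OF refl sPi])
  have joint0: "distr M (PiM I (\<lambda>_. borel)) Yv = PiM I (\<lambda>k. distr M borel (Y k))"
    unfolding Yv_def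
    by (rule M.indep_vars_iff_distr_eq_PiM'[THEN iffD1]) (use aI rvY indY in auto)
  have distrPi: "distr M Pi Yv = Pi"
  proof -
    have "distr M Pi Yv = distr M (PiM I (\<lambda>_. borel)) Yv" by (rule distr_cong) (simp_all add: sPi)
    also have "\<dots> = PiM I (\<lambda>k. distr M borel (Y k))" by (rule joint0)
    also have "\<dots> = Pi" unfolding Pi_def by (rule PiM_cong) (simp_all add: distrY)
    finally show ?thesis .
  qed
  have inv: "distr Pi Pi (\<lambda>y. \<lambda>k\<in>I. y (\<pi> k)) = Pi" if "bij_betw \<pi> I I" for \<pi>
    unfolding Pi_def
    by (rule distr_PiM_reindex) (use probQ that in \<open>auto simp: bij_betw_def\<close>)
  have ties: "measure Pi {y\<in>space Pi. y m = y m'} = 0" if "m \<in> I" "m' \<in> I" "m \<noteq> m'" for m m'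
  proof -
    have Ts: "{y\<in>space Pi. y m = y m'} \<in> sets Pi"
    proof -
      have "(\<lambda>y. y m) \<in> borel_measurable (PiM I (\<lambda>_. borel::real measure))"
        using measurable_component_singleton[OF that(1), of "\<lambda>_. borel::real measure"] by simp
      moreover have "(\<lambda>y. y m') \<in> borel_measurable (PiM I (\<lambda>_. borel::real measure))"
        using measurable_component_singleton[OF that(2), of "\<lambda>_. borel::real measure"] by simp
      ultimately have "(\<lambda>y. y m) \<in> borel_measurable Pi" "(\<lambda>y. y m') \<in> borel_measurable Pi"
        by (simp_all add: measurable_cong_sets[OF sPi refl])
      then show ?thesis by (rule measurable_equality_set)
    qed
    have "measure Pi {y\<in>space Pi. y m = y m'} = measure (distr M Pi Yv) {y\<in>space Pi. y m = y m'}"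
      using distrPi by simp
    also have "\<dots> = measure M (Yv -` {y\<in>space Pi. y m = y m'} \<inter> space M)"
      by (rule measure_distr[OF Yvm Ts])
    also have "Yv -` {y\<in>space Pi. y m = y m'} \<inter> space M = {w\<in>space M. Y m w = Y m' w}"
      using Yvm that by (auto simp: Yv_def dest: measurable_space)
    also have "measure M {w\<in>space M. Y m w = Y m' w} = 0"
    proof (rule ties_zero[OF \<open>prob_space M\<close> _ distrY[OF that(2)] atom])
      have iv: "M.indep_var (PiM {m} (\<lambda>_. borel)) (\<lambda>\<omega>. restrict (\<lambda>i. Y i \<omega>) {m})
                            (PiM {m'} (\<lambda>_. borel)) (\<lambda>\<omega>. restrict (\<lambda>i. Y i \<omega>) {m'})"
        by (rule M.indep_var_restrict[OF indY]) (use that in auto)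
      have "M.indep_var borel ((\<lambda>x. x m) \<circ> (\<lambda>\<omega>. restrict (\<lambda>i. Y i \<omega>) {m})) borel ((\<lambda>x. x m') \<circ> (\<lambda>\<omega>. restrict (\<lambda>i. Y i \<omega>) {m'}))"
        by (rule M.indep_var_compose[OF iv]) simp_all
      moreover have "(\<lambda>x. x m) \<circ> (\<lambda>\<omega>. restrict (\<lambda>i. Y i \<omega>) {m}) = Y m" by (simp add: fun_eq_iff)
      moreover have "(\<lambda>x. x m') \<circ> (\<lambda>\<omega>. restrict (\<lambda>i. Y i \<omega>) {m'}) = Y m'" by (simp add: fun_eq_iff)
      ultimately show "M.indep_var borel (Y m) borel (Y m')" by simp
    qed
    finally show ?thesis .
  qed
  have aePi: "AE y in Pi. inj_on y I"
  proof -
    have "AE y in Pi. \<forall>p\<in>I \<times> I. fst p \<noteq> snd p \<longrightarrow> y (fst p) \<noteq> y (snd p)"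
    proof (rule eventually_ball_finite)
      show "finite (I \<times> I)" using finI by simp
      show "\<forall>p\<in>I \<times> I. AE y in Pi. fst p \<noteq> snd p \<longrightarrow> y (fst p) \<noteq> y (snd p)"
      proof
        fix p assume p: "p \<in> I \<times> I"
        show "AE y in Pi. fst p \<noteq> snd p \<longrightarrow> y (fst p) \<noteq> y (snd p)"
        proof (cases "fst p = snd p")
          case False
          have "{y\<in>space Pi. y (fst p) = y (snd p)} \<in> null_sets Pi"
          proof -
            interpret Pi: prob_space Pi by (rule probPi)
            have Ts: "{y\<in>space Pi. y (fst p) = y (snd p)} \<in> sets Pi"
            proof -
              have "fst p \<in> I" "snd p \<in> I" using p by auto
              then have "(\<lambda>y. y (fst p)) \<in> borel_measurable (PiM I (\<lambda>_. borel::real measure))"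
                "(\<lambda>y. y (snd p)) \<in> borel_measurable (PiM I (\<lambda>_. borel::real measure))"
                using measurable_component_singleton[of _ I "\<lambda>_. borel::real measure"] by simp_all
              then have "(\<lambda>y. y (fst p)) \<in> borel_measurable Pi" "(\<lambda>y. y (snd p)) \<in> borel_measurable Pi"
                by (simp_all add: measurable_cong_sets[OF sPi refl])
              then show ?thesis by (rule measurable_equality_set)
            qed
            moreover have "emeasure Pi {y\<in>space Pi. y (fst p) = y (snd p)} = 0"
              using ties[of "fst p" "snd p"] p False by (simp add: Pi.emeasure_eq_measure mem_Times_iff)
            ultimately show ?thesis by (blast intro: null_setsI)
          qed
          then show ?thesis by (rule AE_I') auto
        qed simp
      qed
    qed
    then show ?thesis
    proof eventually_elim
      case (elim y)
      show ?case
      proof (rule inj_onI, rule ccontr)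
        fix u v assume "u \<in> I" "v \<in> I" "y u = y v" "u \<noteq> v"
        then show False using elim[rule_format, of "(u, v)"] by auto
      qed
    qed
  qed
  define g where "g k = G (real k / (real n + 1))" for k :: nat
  define Fa where "Fa y = g (1 + card {c\<in>Cal. y c \<le> y a})" for y :: "nat \<Rightarrow> real"
  define Fb where "Fb y = g (1 + card {c\<in>Cal. y c \<le> y b})" for y :: "nat \<Rightarrow> real"
  have Fam: "Fa \<in> borel_measurable Pi"
  proof -
    have "(\<lambda>y. card {c\<in>Cal. y c \<le> y a}) \<in> measurable Pi (count_space UNIV)" by (rule meas_cardle[OF CI aI sPi])
    moreover have "(\<lambda>k. g (1 + k)) \<in> measurable (count_space UNIV) borel" by simp
    ultimately show ?thesis unfolding Fa_def by (rule measurable_compose)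
  qed
  have Fbm: "Fb \<in> borel_measurable Pi"
  proof -
    have "(\<lambda>y. card {c\<in>Cal. y c \<le> y b}) \<in> measurable Pi (count_space UNIV)" by (rule meas_cardle[OF CI bI sPi])
    moreover have "(\<lambda>k. g (1 + k)) \<in> measurable (count_space UNIV) borel" by simp
    ultimately show ?thesis unfolding Fb_def by (rule measurable_compose)
  qed
  have Za: "(\<lambda>w. G (umarg n s X w (X (2*n+i) w))) = (\<lambda>w. Fa (Yv w))"
  proof
    fix w
    have "{c\<in>Cal. Yv w c \<le> Yv w a} = {k \<in> {n+1..2*n}. s (X k w) \<le> s (X a w)}"
      using CI aI by (auto simp: Yv_def Y_def Cal_def)
    then show "G (umarg n s X w (X (2*n+i) w)) = Fa (Yv w)"
      unfolding Fa_def g_def umarg_def a_def by (simp add: add.commute)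
  qed
  have Zb: "(\<lambda>w. G (umarg n s X w (X (2*n+j) w))) = (\<lambda>w. Fb (Yv w))"
  proof
    fix w
    have "{c\<in>Cal. Yv w c \<le> Yv w b} = {k \<in> {n+1..2*n}. s (X k w) \<le> s (X b w)}"
      using CI bI by (auto simp: Yv_def Y_def Cal_def)
    then show "G (umarg n s X w (X (2*n+j) w)) = Fb (Yv w)"
      unfolding Fb_def g_def umarg_def b_def by (simp add: add.commute)
  qed
  define E where "E = (\<lambda>f::nat\<Rightarrow>nat\<Rightarrow>real. \<Sum>k\<in>{1..n+1}. \<Sum>l\<in>{1..n+1}. f k l * (1 / ((real n + 2) * (real n + 1)) + (if k = l then 1 / ((real n + 2) * (real n + 1)) else 0)))"
  have EFi: "(\<integral>y. f (1 + card {c\<in>Cal. y c \<le> y a}) (1 + card {c\<in>Cal. y c \<le> y b}) \<partial>Pi) = E f" for f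
    unfolding E_def by (rule EF[OF probPi sPi finC I_def ab cardC aePi inv])
  have mA: "(\<integral>y. Fa y \<partial>Pi) = E (\<lambda>k l. g k)" unfolding Fa_def using EFi[of "\<lambda>k l. g k"] by simp
  have mB: "(\<integral>y. Fb y \<partial>Pi) = E (\<lambda>k l. g l)" unfolding Fb_def using EFi[of "\<lambda>k l. g l"] by simp
  have cAB: "covar Pi Fa Fb = E (\<lambda>k l. (g k - E (\<lambda>k l. g k)) * (g l - E (\<lambda>k l. g l)))"
    unfolding covar_def mA mB unfolding Fa_def Fb_def
    using EFi[of "\<lambda>k l. (g k - E (\<lambda>k l. g k)) * (g l - E (\<lambda>k l. g l))"] by simp
  have cAA: "covar Pi Fa Fa = E (\<lambda>k l. (g k - E (\<lambda>k l. g k)) * (g k - E (\<lambda>k l. g k)))"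
    unfolding covar_def mA unfolding Fa_def
    using EFi[of "\<lambda>k l. (g k - E (\<lambda>k l. g k)) * (g k - E (\<lambda>k l. g k))"] by simp
  have cBB: "covar Pi Fb Fb = E (\<lambda>k l. (g l - E (\<lambda>k l. g l)) * (g l - E (\<lambda>k l. g l)))"
    unfolding covar_def mB unfolding Fb_def
    using EFi[of "\<lambda>k l. (g l - E (\<lambda>k l. g l)) * (g l - E (\<lambda>k l. g l))"] by simp
  have "correl M (\<lambda>w. G (umarg n s X w (X (2*n+i) w))) (\<lambda>w. G (umarg n s X w (X (2*n+j) w)))
        = correl (distr M Pi Yv) Fa Fb"
    unfolding Za Zb by (rule correl_distr[OF Yvm Fam Fbm])
  also have "\<dots> = correl Pi Fa Fb" using distrPi by simp
  also have "\<dots> = 1 / (real n + 2)"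
    unfolding correl_def cAB cAA cBB
    by (rule corr_alg[OF refl refl E_def]) (use nonconst in \<open>simp add: g_def\<close>)
  finally show ?thesis .
qed

end
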